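(* In the periodic lock scheduling problem, there exists an optimal schedule $\sigma$ such that no two consecutive periods $t$ and $t+1$ both have $\sigma(t)=\sigma(t+1)=W$.
   Context: Periodic lock scheduling problem. Time is discrete, periods $t=1,2,\dots$. There are $k$ vessel streams; stream $i$ has a direction $\delta_i\in\{D,U\}$, an integer periodicity $\lambda_i\ge1$ and an integer offset $1\le\mu_i\le\lambda_i$; $a_i(t)=1$ if $t\equiv\mu_i\pmod{\lambda_i}$ and $0$ otherwise, $a_\delta(t)=\sum_{i:\delta_i=\delta}a_i(t)$. A schedule is a sequence $\sigma=(\sigma(t))_{t\ge1}$ with $\sigma(t)\in\{D,U,W\}$ ($D$: process downstream waiting vessels and switch alignment from downstream to upstream; $U$ symmetrically; $W$: wait at current alignment); the initial orientation is arbitrary; it is feasible if the non-$W$ actions alternate between $D$ and $U$. Queue lengths: $n_D(0)=n_U(0)=0$ and for $t\ge1$, $n_\delta(t)=0$ if $\sigma(t)=\delta$ and $n_\delta(t)=n_\delta(t-1)+a_\delta(t)$ otherwise. $C_\sigma(t)=n_D(t)+n_U(t)$ and $C_{\mathrm{avg},\sigma}=\lim_{T\to\infty}\frac1T\sum_{t=1}^TC_\sigma(t)$. A schedule is optimal if it is feasible and minimizes $C_{\mathrm{avg},\sigma}$ over all feasible schedules. *)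

theory Defs
  imports Complex_Main
begin

datatype dir = Down | Up

text \<open>Actions of a schedule: process direction d (and switch), or wait.\<close>
datatype action = Proc dir | Wait

text \<open>A stream is (direction, periodicity lambda, offset mu).\<close>
type_synonym stream = "dir \<times> nat \<times> nat"

definition valid_streams :: "stream list \<Rightarrow> bool" where
  "valid_streams S \<longleftrightarrow> (\<forall>(d, l, m) \<in> set S. 1 \<le> l \<and> 1 \<le> m \<and> m \<le> l)"

definition arr :: "stream \<Rightarrow> nat \<Rightarrow> nat" where
  "arr s t = (case s of (d, l, m) \<Rightarrow> if t mod l = m mod l then 1 else 0)"

definition arr_dir :: "stream list \<Rightarrow> dir \<Rightarrow> nat \<Rightarrow> nat" where
  "arr_dir S d t = (\<Sum>i<length S. if fst (S ! i) = d then arr (S ! i) t else 0)"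

text \<open>Schedules: sigma :: nat => action, only values at t >= 1 matter.
  Feasible: the non-wait actions alternate (initial orientation arbitrary).\<close>
definition feasible :: "(nat \<Rightarrow> action) \<Rightarrow> bool" where
  "feasible \<sigma> \<longleftrightarrow> (\<forall>s t d. 1 \<le> s \<and> s < t \<and> \<sigma> s = Proc d \<and> \<sigma> t \<noteq> Wait
      \<and> (\<forall>r. s < r \<and> r < t \<longrightarrow> \<sigma> r = Wait) \<longrightarrow> \<sigma> t \<noteq> Proc d)"

fun queue :: "stream list \<Rightarrow> (nat \<Rightarrow> action) \<Rightarrow> dir \<Rightarrow> nat \<Rightarrow> nat" where
  "queue S \<sigma> d 0 = 0"
| "queue S \<sigma> d (Suc t) =
     (if \<sigma> (Suc t) = Proc d then 0 else queue S \<sigma> d t + arr_dir S d (Suc t))"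

definition cost :: "stream list \<Rightarrow> (nat \<Rightarrow> action) \<Rightarrow> nat \<Rightarrow> nat" where
  "cost S \<sigma> t = queue S \<sigma> Down t + queue S \<sigma> Up t"

definition avg_cost_partial :: "stream list \<Rightarrow> (nat \<Rightarrow> action) \<Rightarrow> nat \<Rightarrow> real" where
  "avg_cost_partial S \<sigma> T = (\<Sum>t=1..T. real (cost S \<sigma> t)) / real T"

definition has_avg_cost :: "stream list \<Rightarrow> (nat \<Rightarrow> action) \<Rightarrow> real \<Rightarrow> bool" where
  "has_avg_cost S \<sigma> c \<longleftrightarrow> (avg_cost_partial S \<sigma> \<longlonglongrightarrow> c)"

definition optimal :: "stream list \<Rightarrow> (nat \<Rightarrow> action) \<Rightarrow> bool" where
  "optimal S \<sigma> \<longleftrightarrow> feasible \<sigma> \<and> (\<exists>c. has_avg_cost S \<sigma> c \<and>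
     (\<forall>\<sigma>' c'. feasible \<sigma>' \<and> has_avg_cost S \<sigma>' c' \<longrightarrow> c \<le> c'))"

end

theory Submission
  imports Defs
begin


definition walk :: "('s \<Rightarrow> 's \<Rightarrow> bool) \<Rightarrow> 's set \<Rightarrow> 's \<Rightarrow> (nat \<Rightarrow> 's) \<Rightarrow> bool" where
  "walk E Q x0 w \<longleftrightarrow> w 0 = x0 \<and> (\<forall>t. E (w t) (w (Suc t))) \<and> (\<forall>t. w t \<in> Q)"

lemma sum_split3:
  fixes F :: "nat \<Rightarrow> real"
  assumes "i < j" "j \<le> T"
  shows "(\<Sum>t=1..T. F t) = (\<Sum>t=1..i. F t) + (\<Sum>t=Suc i..j. F t) + (\<Sum>t=Suc j..T. F t)"
proof -
  have "{1..T} = {1..i} \<union> {Suc i..j} \<union> {Suc j..T}" using assms by auto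
  moreover have "(\<Sum>t\<in>{1..i} \<union> {Suc i..j} \<union> {Suc j..T}. F t) = (\<Sum>t\<in>{1..i} \<union> {Suc i..j}. F t) + (\<Sum>t=Suc j..T. F t)"
    by (rule sum.union_disjoint) (use assms in auto)
  moreover have "(\<Sum>t\<in>{1..i} \<union> {Suc i..j}. F t) = (\<Sum>t=1..i. F t) + (\<Sum>t=Suc i..j. F t)"
    by (rule sum.union_disjoint) auto
  ultimately show ?thesis by simp
qed

lemma sum_remove:
  fixes F :: "nat \<Rightarrow> real"
  assumes "i < j" "j \<le> T"
  shows "(\<Sum>t=1..T. F t) = (\<Sum>t=1..T-(j-i). if t \<le> i then F t else F (t + (j-i))) + (\<Sum>t=Suc i..j. F t)"
proof -
  let ?d = "j - i"
  have "(\<Sum>t=1..T-?d. if t \<le> i then F t else F (t + ?d)) = (\<Sum>t=1..i. if t \<le> i then F t else F (t + ?d)) + (\<Sum>t=Suc i..T-?d. if t \<le> i then F t else F (t + ?d))"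
  proof (cases "i < T - ?d")
    case True
    then show ?thesis using sum_split3[of i "T-?d" "T-?d" "\<lambda>t. if t \<le> i then F t else F (t + ?d)"] by simp
  next
    case False
    then have "T - ?d = i" using assms by auto
    then show ?thesis by simp
  qed
  also have "(\<Sum>t=1..i. if t \<le> i then F t else F (t + ?d)) = (\<Sum>t=1..i. F t)" by simp
  also have "(\<Sum>t=Suc i..T-?d. if t \<le> i then F t else F (t + ?d)) = (\<Sum>t=Suc i..T-?d. F (t + ?d))" by simp
  also have "\<dots> = (\<Sum>t=Suc j..T. F t)"
  proof -
    have "(\<Sum>t=Suc i + ?d..(T-?d) + ?d. F t) = (\<Sum>t=Suc i..T-?d. F (t + ?d))"
      by (rule sum.shift_bounds_cl_nat_ivl)
    moreover have "Suc i + ?d = Suc j" "(T-?d) + ?d = T" using assms by auto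
    ultimately show ?thesis by simp
  qed
  finally show ?thesis using sum_split3[OF assms, of F] by simp
qed

lemma pigeon_walk:
  assumes "finite Q" "\<forall>t. w t \<in> Q"
  shows "\<exists>i j. a \<le> i \<and> i < j \<and> j \<le> a + card Q \<and> w i = w j"
proof -
  have "w ` {a..a + card Q} \<subseteq> Q" using assms by auto
  then have "card (w ` {a..a + card Q}) \<le> card Q" using assms by (simp add: card_mono)
  then have "card (w ` {a..a + card Q}) < card {a..a + card Q}" by simp
  then have "\<not> inj_on w {a..a + card Q}" by (rule pigeonhole)
  then obtain i j where "i \<in> {a..a + card Q}" "j \<in> {a..a + card Q}" "i \<noteq> j" "w i = w j"
    unfolding inj_on_def by blast
  show ?thesis
  proof (cases "i < j")
    case True
    then show ?thesis using \<open>i \<in> _\<close> \<open>j \<in> _\<close> \<open>w i = w j\<close> by auto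
  next
    case False
    then have "j < i" using \<open>i \<noteq> j\<close> by simp
    then show ?thesis using \<open>i \<in> _\<close> \<open>j \<in> _\<close> \<open>w i = w j\<close> by (metis atLeastAtMost_iff)
  qed
qed

lemma min_mean:
  fixes g :: "'s \<Rightarrow> real"
  assumes fin: "finite Q" and ex: "walk E Q x0 w0"
  shows "\<exists>\<mu> W. walk E Q x0 W \<and> (\<lambda>T. (\<Sum>t=1..T. g (W t)) / real T) \<longlonglongrightarrow> \<mu> \<and>
           (\<forall>w. walk E Q x0 w \<longrightarrow> (\<exists>K. \<forall>T. real T * \<mu> - K \<le> (\<Sum>t=1..T. g (w t))))"
proof -
  define N where "N = card Q"
  define M where "M = {(\<Sum>t=Suc i..j. g (w t)) / real (j - i) | w i j. walk E Q x0 w \<and> i < j \<and> j \<le> i + N \<and> w i = w j}"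
  have finM: "finite M"
  proof -
    have "M \<subseteq> (\<lambda>xs. sum_list (map g xs) / real (length xs)) ` {xs. set xs \<subseteq> Q \<and> length xs \<le> N}"
    proof
      fix m assume "m \<in> M"
      then obtain w i j where m: "m = (\<Sum>t=Suc i..j. g (w t)) / real (j - i)" and wk: "walk E Q x0 w" "i < j" "j \<le> i + N"
        by (auto simp: M_def)
      let ?xs = "map w [Suc i..<Suc j]"
      have "sum_list (map g ?xs) = (\<Sum>t=Suc i..j. g (w t))"
      proof -
        have "sum_list (map g ?xs) = sum (\<lambda>t. g (w t)) (set [Suc i..<Suc j])"
          by (simp only: map_map sum_set_upt_conv_sum_list_nat comp_def)
        then show ?thesis by (simp only: set_upt atLeastLessThanSuc_atLeastAtMost)
      qed
      moreover have "length ?xs = j - i" using wk by simp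
      moreover have "set ?xs \<subseteq> Q" using wk by (auto simp: walk_def)
      ultimately show "m \<in> (\<lambda>xs. sum_list (map g xs) / real (length xs)) ` {xs. set xs \<subseteq> Q \<and> length xs \<le> N}"
        using m wk by (intro image_eqI[of _ _ ?xs]) auto
    qed
    then show ?thesis by (rule finite_subset) (auto intro: finite_imageI finite_lists_length_le fin)
  qed
  have Mne: "M \<noteq> {}"
  proof -
    obtain i j where "0 \<le> i" "i < j" "j \<le> 0 + N" "w0 i = w0 j"
      using pigeon_walk[OF fin, of w0 0] ex unfolding walk_def N_def by blast
    then show ?thesis unfolding M_def using ex by fastforce
  qed
  define \<mu> where "\<mu> = Min M"
  have \<mu>le: "\<mu> * real (j-i) \<le> (\<Sum>t=Suc i..j. g (w t))"
    if "walk E Q x0 w" "i < j" "j \<le> i + N" "w i = w j" for w i j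
  proof -
    have "(\<Sum>t=Suc i..j. g (w t)) / real (j - i) \<in> M" unfolding M_def using that by blast
    then have "\<mu> \<le> (\<Sum>t=Suc i..j. g (w t)) / real (j - i)" unfolding \<mu>_def using finM by simp
    then show ?thesis using that(2) by (simp add: pos_le_divide_eq)
  qed
  have x0Q: "x0 \<in> Q" using ex unfolding walk_def by metis
  define B where "B = Max ((\<lambda>x. \<bar>g x - \<mu>\<bar>) ` Q)"
  have Bge: "\<bar>g x - \<mu>\<bar> \<le> B" if "x \<in> Q" for x unfolding B_def using fin that by simp
  have B0: "0 \<le> B" using Bge[OF x0Q] by linarith
  have low: "\<forall>w. walk E Q x0 w \<longrightarrow> - (real N * B) \<le> (\<Sum>t=1..T. g (w t) - \<mu>)" for T
  proof (induction T rule: less_induct)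
    case (less T)
    show ?case
    proof (intro allI impI)
      fix w assume wk: "walk E Q x0 w"
      show "- (real N * B) \<le> (\<Sum>t=1..T. g (w t) - \<mu>)"
      proof (cases "T \<le> N")
        case True
        have "(\<Sum>t=1..T. - B) \<le> (\<Sum>t=1..T. g (w t) - \<mu>)"
        proof (rule sum_mono)
          fix t
          have "w t \<in> Q" using wk by (simp add: walk_def)
          then have "\<bar>g (w t) - \<mu>\<bar> \<le> B" by (rule Bge)
          then show "- B \<le> g (w t) - \<mu>" by linarith
        qed
        moreover have "(\<Sum>t=1..T. - B) = - (real T * B)" by simp
        moreover have "real T * B \<le> real N * B" using True B0 by (simp add: mult_right_mono)
        ultimately show ?thesis by linarith
      next
        case False
        obtain i j where ij: "0 \<le> i" "i < j" "j \<le> 0 + N" "w i = w j"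
          using pigeon_walk[OF fin, of w 0] wk unfolding walk_def N_def by blast
        define d where "d = j - i"
        define w' where "w' t = (if t \<le> i then w t else w (t + d))" for t
        have wk': "walk E Q x0 w'"
          unfolding walk_def
        proof (intro conjI allI)
          show "w' 0 = x0" using wk by (simp add: w'_def walk_def)
          fix t
          show "w' t \<in> Q" using wk by (simp add: w'_def walk_def)
          show "E (w' t) (w' (Suc t))"
          proof (cases "t < i")
            case True then show ?thesis using wk by (simp add: w'_def walk_def)
          next
            case False
            show ?thesis
            proof (cases "t = i")
              case True
              have "E (w j) (w (Suc j))" using wk by (simp add: walk_def)
              moreover have "Suc j = Suc t + d" using True ij by (simp add: d_def)
              ultimately show ?thesis using True ij by (simp add: w'_def)
            next
              case False
              then have "i < t" using \<open>\<not> t < i\<close> by simp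
              have "E (w (t + d)) (w (Suc (t + d)))" using wk by (simp add: walk_def)
              then show ?thesis using \<open>i < t\<close> by (simp add: w'_def)
            qed
          qed
        qed
        have jT: "j \<le> T" using False ij by simp
        have split: "(\<Sum>t=1..T. g (w t) - \<mu>) = (\<Sum>t=1..T-d. if t \<le> i then g (w t) - \<mu> else g (w (t + d)) - \<mu>) + (\<Sum>t=Suc i..j. g (w t) - \<mu>)"
          unfolding d_def by (rule sum_remove[OF ij(2) jT, of "\<lambda>t. g (w t) - \<mu>"])
        have "(\<Sum>t=1..T-d. if t \<le> i then g (w t) - \<mu> else g (w (t + d)) - \<mu>) = (\<Sum>t=1..T-d. g (w' t) - \<mu>)"
          by (rule sum.cong) (auto simp: w'_def)
        moreover have "T - d < T" using ij jT by (simp add: d_def)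
        ultimately have A: "- (real N * B) \<le> (\<Sum>t=1..T-d. if t \<le> i then g (w t) - \<mu> else g (w (t + d)) - \<mu>)"
          using less.IH wk' by auto
        have "(\<Sum>t=Suc i..j. g (w t) - \<mu>) = (\<Sum>t=Suc i..j. g (w t)) - real (j - i) * \<mu>"
          by (simp add: sum_subtractf)
        moreover have "\<mu> * real (j-i) \<le> (\<Sum>t=Suc i..j. g (w t))" using \<mu>le[OF wk ij(2)] ij by simp
        ultimately have "0 \<le> (\<Sum>t=Suc i..j. g (w t) - \<mu>)" by (simp add: mult.commute)
        then show ?thesis using A split by linarith
      qed
    qed
  qed
  have lowb: "\<exists>K. \<forall>T. real T * \<mu> - K \<le> (\<Sum>t=1..T. g (w t))" if "walk E Q x0 w" for w
  proof (intro exI allI)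
    fix T
    have "(\<Sum>t=1..T. g (w t) - \<mu>) = (\<Sum>t=1..T. g (w t)) - real T * \<mu>" by (simp add: sum_subtractf)
    then show "real T * \<mu> - real N * B \<le> (\<Sum>t=1..T. g (w t))" using low[of T] that by auto
  qed
  have "\<mu> \<in> M" unfolding \<mu>_def using finM Mne by simp
  then obtain w1 i0 j0 where w1: "walk E Q x0 w1" "i0 < j0" "j0 \<le> i0 + N" "w1 i0 = w1 j0"
    and \<mu>eq: "\<mu> = (\<Sum>t=Suc i0..j0. g (w1 t)) / real (j0 - i0)"
    unfolding M_def by blast
  define n where "n = j0 - i0"
  have n0: "0 < n" using w1 by (simp add: n_def)
  define W where "W t = (if t < i0 then w1 t else w1 (i0 + (t - i0) mod n))" for t
  have key: "w1 (i0 + Suc r mod n) = w1 (Suc (i0 + r))" if "r < n" for r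
  proof (cases "Suc r < n")
    case True then show ?thesis by simp
  next
    case False
    then have "Suc r = n" using that by simp
    then have "Suc (i0 + r) = j0" using w1 by (simp add: n_def)
    then show ?thesis using w1 \<open>Suc r = n\<close> by simp
  qed
  have wW: "walk E Q x0 W"
    unfolding walk_def
  proof (intro conjI allI)
    show "W 0 = x0" using w1 by (simp add: W_def walk_def)
    fix t
    show "W t \<in> Q" using w1 by (simp add: W_def walk_def)
    show "E (W t) (W (Suc t))"
    proof (cases "Suc t < i0")
      case True then show ?thesis using w1 by (simp add: W_def walk_def)
    next
      case False
      show ?thesis
      proof (cases "Suc t = i0")
        case True
        then have "W (Suc t) = w1 (Suc t)" "W t = w1 t" by (simp_all add: W_def)
        then show ?thesis using w1 by (simp add: walk_def)
      next
        case False
        then have ti: "i0 \<le> t" using \<open>\<not> Suc t < i0\<close> by simp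
        define r where "r = (t - i0) mod n"
        have rn: "r < n" using n0 by (simp add: r_def)
        have "(Suc t - i0) mod n = Suc r mod n" using ti by (simp add: r_def mod_Suc_eq Suc_diff_le)
        then have "W (Suc t) = w1 (Suc (i0 + r))" using ti key[OF rn] by (simp add: W_def)
        moreover have "W t = w1 (i0 + r)" using ti by (simp add: W_def r_def)
        ultimately show ?thesis using w1 by (simp add: walk_def)
      qed
    qed
  qed
  have per: "W (t + n) = W t" if "i0 \<le> t" for t
  proof -
    have "t + n - i0 = (t - i0) + n" using that by simp
    then have "(t + n - i0) mod n = (t - i0) mod n" by simp
    then show ?thesis using that by (simp add: W_def)
  qed
  have persum: "(\<Sum>t=Suc i0..i0+n. g (W t)) = \<mu> * real n"
  proof -
    have "(\<Sum>t=Suc i0..i0+n. g (W t)) = (\<Sum>t=Suc i0..j0. g (w1 t))"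
    proof (rule sum.cong)
      show "{Suc i0..i0+n} = {Suc i0..j0}" using w1 by (simp add: n_def)
      fix t assume t: "t \<in> {Suc i0..j0}"
      show "g (W t) = g (w1 t)"
      proof (cases "t < j0")
        case True
        then have "(t - i0) mod n = t - i0" using t by (simp add: n_def)
        then show ?thesis using t by (simp add: W_def)
      next
        case False
        then have "t = j0" using t by simp
        then show ?thesis using w1 by (simp add: W_def n_def)
      qed
    qed
    then show ?thesis using \<mu>eq n0 by (simp add: n_def)
  qed
  have window: "(\<Sum>t=Suc (i0 + k)..i0 + k + n. g (W t)) = \<mu> * real n" for k
  proof (induction k)
    case 0 then show ?case using persum by simp
  next
    case (Suc k)
    let ?T = "i0 + k"
    have e1: "(\<Sum>t=Suc ?T..Suc (?T + n). g (W t)) = g (W (Suc ?T)) + (\<Sum>t=Suc (Suc ?T)..Suc (?T + n). g (W t))"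
      by (rule sum.atLeast_Suc_atMost) simp
    have e2: "(\<Sum>t=Suc ?T..Suc (?T + n). g (W t)) = (\<Sum>t=Suc ?T..?T + n. g (W t)) + g (W (Suc (?T + n)))"
      by (simp add: sum.cl_ivl_Suc)
    have "W (Suc (?T + n)) = W (Suc ?T)" using per[of "Suc ?T"] by simp
    then show ?case using e1 e2 Suc.IH by simp
  qed
  define D where "D T = (\<Sum>t=1..T. g (W t)) - real T * \<mu>" for T
  have Dper: "D (T + n) = D T" if "i0 \<le> T" for T
  proof -
    have "(\<Sum>t=1..T + n. g (W t)) = (\<Sum>t=1..T. g (W t)) + (\<Sum>t=T+1..T + n. g (W t))"
      by (rule sum.ub_add_nat) simp
    moreover have "(\<Sum>t=T+1..T + n. g (W t)) = \<mu> * real n"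
      using window[of "T - i0"] that by simp
    ultimately show ?thesis by (simp add: D_def algebra_simps)
  qed
  define Kb where "Kb = Max ((\<lambda>T. \<bar>D T\<bar>) ` {..i0+n})"
  have Dbd: "\<bar>D T\<bar> \<le> Kb" for T
  proof (induction T rule: less_induct)
    case (less T)
    show ?case
    proof (cases "T \<le> i0 + n")
      case True then show ?thesis unfolding Kb_def by simp
    next
      case False
      then have "D T = D (T - n)" using Dper[of "T - n"] by simp
      moreover have "T - n < T" using False n0 by simp
      ultimately show ?thesis using less.IH by simp
    qed
  qed
  have conv: "(\<lambda>T. (\<Sum>t=1..T. g (W t)) / real T) \<longlonglongrightarrow> \<mu>"
  proof (rule tendsto_sandwich[of "\<lambda>T. \<mu> - Kb / real T" _ _ "\<lambda>T. \<mu> + Kb / real T"])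
    show "\<forall>\<^sub>F T in sequentially. \<mu> - Kb / real T \<le> (\<Sum>t=1..T. g (W t)) / real T"
    proof (rule eventually_sequentiallyI[of 1])
      fix T :: nat assume "1 \<le> T"
      then have Tp: "0 < real T" by simp
      have "-Kb \<le> D T" using Dbd[of T] by linarith
      then have "real T * \<mu> - Kb \<le> (\<Sum>t=1..T. g (W t))" by (simp add: D_def)
      then have "(real T * \<mu> - Kb) / real T \<le> (\<Sum>t=1..T. g (W t)) / real T"
        using Tp by (simp add: divide_right_mono)
      moreover have "(real T * \<mu> - Kb) / real T = \<mu> - Kb / real T" using Tp by (simp add: field_simps)
      ultimately show "\<mu> - Kb / real T \<le> (\<Sum>t=1..T. g (W t)) / real T" by simp
    qed
    show "\<forall>\<^sub>F T in sequentially. (\<Sum>t=1..T. g (W t)) / real T \<le> \<mu> + Kb / real T"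
    proof (rule eventually_sequentiallyI[of 1])
      fix T :: nat assume "1 \<le> T"
      then have Tp: "0 < real T" by simp
      have "D T \<le> Kb" using Dbd[of T] by linarith
      then have "(\<Sum>t=1..T. g (W t)) \<le> real T * \<mu> + Kb" by (simp add: D_def)
      then have "(\<Sum>t=1..T. g (W t)) / real T \<le> (real T * \<mu> + Kb) / real T"
        using Tp by (simp add: divide_right_mono)
      moreover have "(real T * \<mu> + Kb) / real T = \<mu> + Kb / real T" using Tp by (simp add: field_simps)
      ultimately show "(\<Sum>t=1..T. g (W t)) / real T \<le> \<mu> + Kb / real T" by simp
    qed
    show "(\<lambda>T. \<mu> - Kb / real T) \<longlonglongrightarrow> \<mu>"
      using tendsto_diff[OF tendsto_const[of \<mu>] lim_const_over_n[of Kb]] by simp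
    show "(\<lambda>T. \<mu> + Kb / real T) \<longlonglongrightarrow> \<mu>"
      using tendsto_add[OF tendsto_const[of \<mu>] lim_const_over_n[of Kb]] by simp
  qed
  show ?thesis using wW conv lowb by blast
qed



fun flip :: "dir \<Rightarrow> dir" where "flip Down = Up" | "flip Up = Down"

fun pdir :: "action \<Rightarrow> dir" where "pdir (Proc d) = d" | "pdir Wait = Down"

primrec ld :: "(nat \<Rightarrow> action) \<Rightarrow> nat \<Rightarrow> dir option" where
  "ld \<sigma> 0 = None"
| "ld \<sigma> (Suc t) = (case \<sigma> (Suc t) of Proc d \<Rightarrow> Some d | Wait \<Rightarrow> ld \<sigma> t)"

definition nextp :: "(nat \<Rightarrow> action) \<Rightarrow> nat \<Rightarrow> nat" where
  "nextp \<sigma> t = (LEAST n. t < n \<and> \<sigma> n \<noteq> Wait)"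

definition act :: "(nat \<Rightarrow> action) \<Rightarrow> nat \<Rightarrow> dir option \<Rightarrow> action" where
  "act \<sigma> t ori = (if \<sigma> t \<noteq> Wait then \<sigma> t
     else if (\<exists>n>t. \<sigma> n \<noteq> Wait) then
       (if ori = Some (flip (pdir (\<sigma> (nextp \<sigma> t)))) \<and> nextp \<sigma> t = Suc t then Wait
        else Proc (case ori of Some d \<Rightarrow> flip d | None \<Rightarrow> flip (pdir (\<sigma> (nextp \<sigma> t)))))
     else Proc (case ori of Some d \<Rightarrow> flip d | None \<Rightarrow> Down))"

primrec Lst :: "(nat \<Rightarrow> action) \<Rightarrow> nat \<Rightarrow> dir option" where
  "Lst \<sigma> 0 = None"
| "Lst \<sigma> (Suc t) = (case act \<sigma> (Suc t) (Lst \<sigma> t) of Proc d \<Rightarrow> Some d | Wait \<Rightarrow> Lst \<sigma> t)"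

definition fill :: "(nat \<Rightarrow> action) \<Rightarrow> nat \<Rightarrow> action" where
  "fill \<sigma> t = act \<sigma> t (Lst \<sigma> (t - 1))"

lemma flip_neq[simp]: "flip d \<noteq> d" by (cases d) auto
lemma flip_neq2[simp]: "d \<noteq> flip d" by (cases d) auto

lemma ld_fill: "ld (fill \<sigma>) t = Lst \<sigma> t"
  by (induction t) (auto simp: fill_def split: action.splits)

lemma fill_proc: "\<sigma> t = Proc d \<Longrightarrow> fill \<sigma> t = Proc d"
  by (simp add: fill_def act_def)

lemma nextp_prop: "\<exists>n>t. \<sigma> n \<noteq> Wait \<Longrightarrow> t < nextp \<sigma> t \<and> \<sigma> (nextp \<sigma> t) \<noteq> Wait"
  unfolding nextp_def by (rule LeastI_ex) auto

lemma nextp_eq: "t < n \<Longrightarrow> \<sigma> n \<noteq> Wait \<Longrightarrow> (\<forall>r. t < r \<and> r < n \<longrightarrow> \<sigma> r = Wait) \<Longrightarrow> nextp \<sigma> t = n"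
  unfolding nextp_def
  by (rule Least_equality) (auto simp: not_less[symmetric])

lemma fill_noWW: "1 \<le> t \<Longrightarrow> fill \<sigma> t = Wait \<Longrightarrow> fill \<sigma> (Suc t) \<noteq> Wait"
proof
  assume t: "1 \<le> t" and w1: "fill \<sigma> t = Wait" and w2: "fill \<sigma> (Suc t) = Wait"
  from w2 have s2: "\<sigma> (Suc t) = Wait" and ex: "\<exists>n>Suc t. \<sigma> n \<noteq> Wait"
    by (auto simp: fill_def act_def split: if_splits)
  have ex': "\<exists>n>t. \<sigma> n \<noteq> Wait" using ex by (meson Suc_lessD)
  from w1 have s1: "\<sigma> t = Wait" and np: "nextp \<sigma> t = Suc t"
    using ex' by (auto simp: fill_def act_def split: if_splits)
  have "\<sigma> (nextp \<sigma> t) \<noteq> Wait" using nextp_prop[of t \<sigma>] ex' by auto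
  then show False using np s2 by simp
qed

lemma Lst_orient:
  assumes feas: "feasible \<sigma>" and sn: "\<sigma> n = Proc e"
  shows "t < n \<and> (\<forall>r. t < r \<and> r < n \<longrightarrow> \<sigma> r = Wait) \<longrightarrow> (Lst \<sigma> t \<noteq> Some e \<or> t + 2 \<le> n)"
proof (induction t)
  case 0 then show ?case by simp
next
  case (Suc t)
  show ?case
  proof (intro impI)
    assume h: "Suc t < n \<and> (\<forall>r. Suc t < r \<and> r < n \<longrightarrow> \<sigma> r = Wait)"
    show "Lst \<sigma> (Suc t) \<noteq> Some e \<or> Suc t + 2 \<le> n"
    proof (cases "\<sigma> (Suc t) = Wait")
      case False
      then obtain d where d: "\<sigma> (Suc t) = Proc d" by (cases "\<sigma> (Suc t)") auto
      then have "Lst \<sigma> (Suc t) = Some d" by (simp add: act_def)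
      moreover have "\<sigma> n \<noteq> Proc d"
        using feas d h sn unfolding feasible_def by (metis action.distinct(1) le_add1 plus_1_eq_Suc)
      ultimately show ?thesis using sn by auto
    next
      case True
      have np: "nextp \<sigma> (Suc t) = n" using h sn by (intro nextp_eq) auto
      have ex: "\<exists>m>Suc t. \<sigma> m \<noteq> Wait" using h sn by auto
      have IH: "Lst \<sigma> t \<noteq> Some e \<or> t + 2 \<le> n"
      proof -
        have "\<forall>r. t < r \<and> r < n \<longrightarrow> \<sigma> r = Wait"
        proof (intro allI impI)
          fix r assume "t < r \<and> r < n"
          then show "\<sigma> r = Wait" using h True by (cases "r = Suc t") auto
        qed
        then show ?thesis using Suc.IH h by simp
      qed
      show ?thesis
        using IH h True np ex sn
        by (cases "Lst \<sigma> t"; cases e; cases "the (Lst \<sigma> t)") (auto simp: act_def)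
    qed
  qed
qed

lemma Lst_orient':
  assumes "feasible \<sigma>" "\<sigma> n = Proc e"
  shows "Lst \<sigma> (n - 1) \<noteq> Some e"
proof (cases n)
  case 0 then show ?thesis by simp
next
  case (Suc m)
  then show ?thesis using Lst_orient[OF assms, of m] by auto
qed



type_synonym st = "nat \<times> dir option \<times> nat \<times> nat \<times> bool"

definition fstep :: "stream list \<Rightarrow> nat \<Rightarrow> st \<Rightarrow> action \<Rightarrow> st" where
  "fstep S L x a = (case x of (r, ori, qd, qu, wt) \<Rightarrow>
     (Suc r mod L, (case a of Proc d \<Rightarrow> Some d | Wait \<Rightarrow> ori),
      (if a = Proc Down then 0 else qd + arr_dir S Down (Suc r)),
      (if a = Proc Up then 0 else qu + arr_dir S Up (Suc r)), a = Wait))"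

definition okst :: "st \<Rightarrow> action \<Rightarrow> bool" where
  "okst x a = (case x of (r, ori, qd, qu, wt) \<Rightarrow> (case a of Wait \<Rightarrow> \<not> wt | Proc d \<Rightarrow> ori \<noteq> Some d))"

definition Inv :: "nat \<Rightarrow> nat \<Rightarrow> st \<Rightarrow> bool" where
  "Inv L k x = (case x of (r, ori, qd, qu, wt) \<Rightarrow> r < L \<and>
     (case ori of None \<Rightarrow> (if wt then qd \<le> k \<and> qu \<le> k else qd = 0 \<and> qu = 0)
      | Some Down \<Rightarrow> (if wt then qd \<le> k \<and> qu \<le> 3*k else qd = 0 \<and> qu \<le> 2*k)
      | Some Up \<Rightarrow> (if wt then qu \<le> k \<and> qd \<le> 3*k else qu = 0 \<and> qd \<le> 2*k)))"

definition gst :: "st \<Rightarrow> real" where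
  "gst x = (case x of (r, ori, qd, qu, wt) \<Rightarrow> real (qd + qu))"

definition Est :: "stream list \<Rightarrow> nat \<Rightarrow> st \<Rightarrow> st \<Rightarrow> bool" where
  "Est S L x y = (\<exists>a. okst x a \<and> y = fstep S L x a)"

definition stof :: "stream list \<Rightarrow> nat \<Rightarrow> (nat \<Rightarrow> action) \<Rightarrow> nat \<Rightarrow> st" where
  "stof S L \<sigma> t = (t mod L, ld \<sigma> t, queue S \<sigma> Down t, queue S \<sigma> Up t, 1 \<le> t \<and> \<sigma> t = Wait)"

definition Lof :: "stream list \<Rightarrow> nat" where
  "Lof S = prod_list (map (\<lambda>s. fst (snd s)) S)"

lemma arr_le1: "arr s t \<le> Suc 0" by (auto simp: arr_def split: prod.splits)

lemma arr_dir_le: "arr_dir S d t \<le> length S"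
proof -
  have "arr_dir S d t \<le> of_nat (card {..<length S}) * 1"
    unfolding arr_dir_def by (rule sum_bounded_above) (auto simp: arr_le1)
  then show ?thesis by simp
qed

lemma Lof_pos: "valid_streams S \<Longrightarrow> 0 < Lof S"
  unfolding Lof_def valid_streams_def
  by (induction S) (auto split: prod.splits)

lemma Lof_dvd: "s \<in> set S \<Longrightarrow> fst (snd s) dvd Lof S"
  unfolding Lof_def by (induction S) auto

lemma arr_dir_mod: "arr_dir S d (t mod Lof S) = arr_dir S d t"
  unfolding arr_dir_def
proof (rule sum.cong)
  fix i assume "i \<in> {..<length S}"
  then have "S ! i \<in> set S" by simp
  then have dv: "fst (snd (S ! i)) dvd Lof S" by (rule Lof_dvd)
  obtain d' l m where si: "S ! i = (d', l, m)" by (cases "S ! i") auto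
  have "t mod Lof S mod l = t mod l" using dv si by (simp add: mod_mod_cancel)
  then show "(if fst (S ! i) = d then arr (S ! i) (t mod Lof S) else 0) = (if fst (S ! i) = d then arr (S ! i) t else 0)"
    using si by (simp add: arr_def)
qed simp

lemma stof_Suc: "stof S (Lof S) \<sigma> (Suc t) = fstep S (Lof S) (stof S (Lof S) \<sigma> t) (\<sigma> (Suc t))"
proof -
  have a: "arr_dir S d (Suc (t mod Lof S)) = arr_dir S d (Suc t)" for d
    by (metis arr_dir_mod mod_Suc_eq)
  show ?thesis
    by (simp add: stof_def fstep_def a mod_Suc_eq split: action.splits)
qed

lemma Inv_step: "0 < L \<Longrightarrow> Inv L (length S) x \<Longrightarrow> okst x a \<Longrightarrow> Inv L (length S) (fstep S L x a)"
  using arr_dir_le[of S Down "Suc (fst x)"] arr_dir_le[of S Up "Suc (fst x)"]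
  by (cases x; cases a) (auto simp: Inv_def okst_def fstep_def split: option.splits dir.splits if_splits)

lemma Inv_finite: "finite {x. Inv L k x}"
proof (rule finite_subset)
  show "{x. Inv L k x} \<subseteq> {..<L} \<times> {None, Some Down, Some Up} \<times> {..3*k} \<times> {..3*k} \<times> UNIV"
  proof
    fix x assume "x \<in> {x. Inv L k x}"
    then show "x \<in> {..<L} \<times> {None, Some Down, Some Up} \<times> {..3*k} \<times> {..3*k} \<times> UNIV"
      by (cases x) (auto simp: Inv_def split: option.splits dir.splits if_splits)
  qed
  show "finite ({..<L} \<times> {None, Some Down, Some Up} \<times> {..3*k} \<times> {..3*k} \<times> (UNIV :: bool set))"
    by simp
qed



lemma stof0: "stof S L \<sigma> 0 = (0, None, 0, 0, False)"
  by (simp add: stof_def)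

lemma walk_stof:
  assumes v: "valid_streams S" and ok: "\<forall>t. okst (stof S (Lof S) \<sigma> t) (\<sigma> (Suc t))"
  shows "walk (Est S (Lof S)) {x. Inv (Lof S) (length S) x} (0, None, 0, 0, False) (stof S (Lof S) \<sigma>)"
  unfolding walk_def
proof (intro conjI allI)
  show "stof S (Lof S) \<sigma> 0 = (0, None, 0, 0, False)" by (rule stof0)
  fix t
  show "Est S (Lof S) (stof S (Lof S) \<sigma> t) (stof S (Lof S) \<sigma> (Suc t))"
    unfolding Est_def using ok stof_Suc by blast
  show "stof S (Lof S) \<sigma> t \<in> {x. Inv (Lof S) (length S) x}"
  proof (induction t)
    case 0 then show ?case using Lof_pos[OF v] by (simp add: stof0 Inv_def)
  next
    case (Suc t)
    then show ?case using Inv_step[OF Lof_pos[OF v]] ok stof_Suc by simp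
  qed
qed

lemma fill_ok:
  assumes feas: "feasible \<sigma>"
  shows "okst (stof S L (fill \<sigma>) t) (fill \<sigma> (Suc t))"
proof (cases "fill \<sigma> (Suc t)")
  case Wait
  then have "\<not> (1 \<le> t \<and> fill \<sigma> t = Wait)" using fill_noWW by blast
  then show ?thesis using Wait by (simp add: okst_def stof_def)
next
  case (Proc d)
  have fe: "fill \<sigma> (Suc t) = act \<sigma> (Suc t) (Lst \<sigma> t)" by (simp add: fill_def)
  have "Lst \<sigma> t \<noteq> Some d"
  proof (cases "\<sigma> (Suc t) = Wait")
    case False
    then have "\<sigma> (Suc t) = Proc d" using Proc fe by (simp add: act_def)
    then show ?thesis using Lst_orient'[OF feas, of "Suc t" d] by simp
  next
    case True
    then show ?thesis using Proc fe
      by (cases "Lst \<sigma> t") (auto simp: act_def split: if_splits)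
  qed
  then show ?thesis using Proc by (simp add: okst_def stof_def ld_fill)
qed

lemma ld_after:
  assumes "\<sigma> s = Proc d" "1 \<le> s" "s \<le> u" "\<forall>r. s < r \<and> r \<le> u \<longrightarrow> \<sigma> r = Wait"
  shows "ld \<sigma> u = Some d"
  using assms(3,4)
proof (induction u rule: dec_induct)
  case base
  then show ?case using assms(1,2) by (cases s) auto
next
  case (step u)
  then show ?case by auto
qed

lemma sched_of_walk:
  assumes wk: "walk (Est S (Lof S)) Q (0, None, 0, 0, False) W"
  shows "\<exists>\<sigma>. feasible \<sigma> \<and> (\<forall>t\<ge>1. \<not> (\<sigma> t = Wait \<and> \<sigma> (Suc t) = Wait)) \<and> (\<forall>t. stof S (Lof S) \<sigma> t = W t)"
proof -
  define L where "L = Lof S"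
  define \<sigma> where "\<sigma> t = (if t = 0 then Wait else SOME a. okst (W (t-1)) a \<and> W t = fstep S L (W (t-1)) a)" for t
  have h: "okst (W t) (\<sigma> (Suc t)) \<and> W (Suc t) = fstep S L (W t) (\<sigma> (Suc t))" for t
  proof -
    have "\<exists>a. okst (W t) a \<and> W (Suc t) = fstep S L (W t) a"
      using wk unfolding walk_def Est_def L_def by blast
    from someI_ex[OF this] show ?thesis unfolding \<sigma>_def by simp
  qed
  have eq: "stof S L \<sigma> t = W t" for t
  proof (induction t)
    case 0 then show ?case using wk by (simp add: stof0 walk_def)
  next
    case (Suc t)
    then show ?case using stof_Suc[of S \<sigma> t] h[of t] by (simp add: L_def)
  qed
  have ww: "\<forall>t\<ge>1. \<not> (\<sigma> t = Wait \<and> \<sigma> (Suc t) = Wait)"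
  proof (intro allI impI notI)
    fix t assume t: "1 \<le> t" and w: "\<sigma> t = Wait \<and> \<sigma> (Suc t) = Wait"
    have "okst (stof S L \<sigma> t) (\<sigma> (Suc t))" using h[of t] eq[of t] by simp
    then show False using t w by (simp add: okst_def stof_def)
  qed
  have feas: "feasible \<sigma>"
    unfolding feasible_def
  proof (intro allI impI)
    fix s t d
    assume a: "1 \<le> s \<and> s < t \<and> \<sigma> s = Proc d \<and> \<sigma> t \<noteq> Wait \<and> (\<forall>r. s < r \<and> r < t \<longrightarrow> \<sigma> r = Wait)"
    then have "ld \<sigma> (t - 1) = Some d" by (intro ld_after[of \<sigma> s d]) auto
    moreover have "okst (stof S L \<sigma> (t - 1)) (\<sigma> t)" using h[of "t - 1"] eq[of "t - 1"] a by simp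
    ultimately show "\<sigma> t \<noteq> Proc d" by (auto simp: okst_def stof_def)
  qed
  show ?thesis using feas ww eq unfolding L_def by blast
qed

lemma queue_dom:
  assumes "\<forall>t d. \<sigma> t = Proc d \<longrightarrow> \<sigma>' t = Proc d"
  shows "queue S \<sigma>' d t \<le> queue S \<sigma> d t"
  using assms by (induction t) auto



theorem lemma5:
  fixes S :: "stream list"
  assumes "valid_streams S"
  shows "\<exists>\<sigma>. optimal S \<sigma> \<and> (\<forall>t\<ge>1. \<not> (\<sigma> t = Wait \<and> \<sigma> (Suc t) = Wait))"
proof -
  note v = assms
  define L where "L = Lof S"
  define Q where "Q = {x. Inv L (length S) x}"
  define E where "E = Est S L"
  define x0 :: st where "x0 = (0, None, 0, 0, False)"
  have wfill: "walk E Q x0 (stof S L (fill \<sigma>))" if "feasible \<sigma>" for \<sigma>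
    unfolding E_def Q_def x0_def L_def
    by (rule walk_stof[OF v]) (use fill_ok[OF that] in blast)
  have feasW: "feasible (\<lambda>_. Wait)" by (simp add: feasible_def)
  have gcost: "gst (stof S L \<sigma> t) = real (cost S \<sigma> t)" for \<sigma> t
    by (simp add: gst_def stof_def cost_def)
  obtain \<mu> W where wW: "walk E Q x0 W"
    and conv: "(\<lambda>T. (\<Sum>t=1..T. gst (W t)) / real T) \<longlonglongrightarrow> \<mu>"
    and low: "\<forall>w. walk E Q x0 w \<longrightarrow> (\<exists>K. \<forall>T. real T * \<mu> - K \<le> (\<Sum>t=1..T. gst (w t)))"
    using min_mean[OF Inv_finite[of L "length S"] wfill[OF feasW, unfolded Q_def], of gst] unfolding Q_def
    by blast
  obtain \<sigma> where feas: "feasible \<sigma>" and ww: "\<forall>t\<ge>1. \<not> (\<sigma> t = Wait \<and> \<sigma> (Suc t) = Wait)"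
    and eq: "\<forall>t. stof S L \<sigma> t = W t"
    using sched_of_walk[of S Q W] wW unfolding E_def x0_def L_def by blast
  have hac: "has_avg_cost S \<sigma> \<mu>"
  proof -
    have "avg_cost_partial S \<sigma> = (\<lambda>T. (\<Sum>t=1..T. gst (W t)) / real T)"
      by (rule ext) (simp add: avg_cost_partial_def gcost eq[rule_format, symmetric])
    then show ?thesis using conv by (simp add: has_avg_cost_def)
  qed
  have best: "\<mu> \<le> c'" if f1: "feasible \<sigma>'" and f2: "has_avg_cost S \<sigma>' c'" for \<sigma>' c'
  proof -
    obtain K where K: "\<forall>T. real T * \<mu> - K \<le> (\<Sum>t=1..T. gst (stof S L (fill \<sigma>') t))"
      using low wfill[OF f1] by blast
    have dom: "cost S (fill \<sigma>') t \<le> cost S \<sigma>' t" for t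
    proof -
      have "\<forall>t d. \<sigma>' t = Proc d \<longrightarrow> fill \<sigma>' t = Proc d" using fill_proc by blast
      then have "queue S (fill \<sigma>') dd t \<le> queue S \<sigma>' dd t" for dd by (rule queue_dom)
      then show ?thesis unfolding cost_def by (simp add: add_mono)
    qed
    have lb: "\<mu> - K / real T \<le> avg_cost_partial S \<sigma>' T" if "1 \<le> T" for T
    proof -
      have Tp: "0 < real T" using that by simp
      have "real T * \<mu> - K \<le> (\<Sum>t=1..T. real (cost S \<sigma>' t))"
      proof -
        have "(\<Sum>t=1..T. gst (stof S L (fill \<sigma>') t)) \<le> (\<Sum>t=1..T. real (cost S \<sigma>' t))"
          by (rule sum_mono) (simp add: gcost dom)
        moreover have "real T * \<mu> - K \<le> (\<Sum>t=1..T. gst (stof S L (fill \<sigma>') t))" using K by blast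
        ultimately show ?thesis by linarith
      qed
      then have "(real T * \<mu> - K) / real T \<le> (\<Sum>t=1..T. real (cost S \<sigma>' t)) / real T"
        using Tp by (simp add: divide_right_mono)
      moreover have "(real T * \<mu> - K) / real T = \<mu> - K / real T" using Tp by (simp add: field_simps)
      ultimately show ?thesis by (simp add: avg_cost_partial_def)
    qed
    have l1: "(\<lambda>T. \<mu> - K / real T) \<longlonglongrightarrow> \<mu>"
      using tendsto_diff[OF tendsto_const[of \<mu>] lim_const_over_n[of K]] by simp
    have l2: "avg_cost_partial S \<sigma>' \<longlonglongrightarrow> c'" using f2 by (simp add: has_avg_cost_def)
    show ?thesis by (rule LIMSEQ_le[OF l1 l2]) (use lb in auto)
  qed
  have "optimal S \<sigma>" unfolding optimal_def using feas hac best by blast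
  then show ?thesis using ww by blast
qed

end
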